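(* Let $c\in V$ and let $c=a+b$ be an $X2$-decomposition with $x_0=\|a\|_X$ and $y_0=\|b\|_Y$ (so $y_0=h^c_{YX}(x_0)$). Then: (1) $\int_0^{\|c\|_X} h^c_{YX}(x)\,dx=\tfrac12\|c\|_2^2$; (2) $\int_{x_0}^{\|c\|_X} h^c_{YX}(x)\,dx=\tfrac12\|b\|_2^2$; (3) the area of the region $\{(x,y): 0\le x\le \|c\|_X,\ y_0\le y\le h^c_{YX}(x)\}$ equals $\tfrac12\|a\|_2^2$; (4) $x_0y_0=\langle a,b\rangle$.
   Context: $V$ is a finite dimensional real vector space with a positive definite symmetric bilinear form $\langle\cdot,\cdot\rangle$ and $\|v\|_2=\sqrt{\langle v,v\rangle}$; $\|\cdot\|_X$ is a norm on $V$ with dual norm $\|v\|_Y=\max\{\langle v,w\rangle:\|w\|_X=1\}$. A decomposition $c=a+b$ is an $X2$-decomposition if for every decomposition $c=a'+b'$ we have $\|a'\|_X>\|a\|_X$, or $\|b'\|_2>\|b\|_2$, or $(\|a'\|_X,\|b'\|_2)=(\|a\|_X,\|b\|_2)$. For $x\in[0,\|c\|_X]$ let $\alpha^c_{2X}(x)$ be the unique $a\in V$ minimizing $\|c-a\|_2$ subject to $\|a\|_X\le x$, and define $h^c_{YX}(x)=\|c-\alpha^c_{2X}(x)\|_Y$ (the Pareto sub-frontier; $h^c_{YX}$ is a decreasing continuous function $[0,\|c\|_X]\to[0,\|c\|_Y]$, and for every $X2$-decomposition $c=a+b$ one has $a=\alpha^c_{2X}(\|a\|_X)$). *)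

theory Defs
  imports "HOL-Analysis.Analysis"
begin

text \<open>The space V is modelled by a type of class euclidean_space, whose inner product
  plays the role of the positive definite symmetric bilinear form, and whose norm is the
  2-norm.\<close>

definition is_norm :: "('a::real_vector \<Rightarrow> real) \<Rightarrow> bool" where
  "is_norm N \<longleftrightarrow> (\<forall>x. N x \<ge> 0) \<and> (\<forall>x. N x = 0 \<longleftrightarrow> x = 0)
     \<and> (\<forall>r x. N (r *\<^sub>R x) = \<bar>r\<bar> * N x) \<and> (\<forall>x y. N (x + y) \<le> N x + N y)"

definition dual_norm :: "('a::real_inner \<Rightarrow> real) \<Rightarrow> 'a \<Rightarrow> real" where
  "dual_norm N v = (SUP w\<in>{w. N w = 1}. inner v w)"

definition is_X2_decomp :: "('a::real_normed_vector \<Rightarrow> real) \<Rightarrow> 'a \<Rightarrow> 'a \<Rightarrow> 'a \<Rightarrow> bool" where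
  "is_X2_decomp N c a b \<longleftrightarrow> c = a + b \<and>
     (\<forall>a' b'. c = a' + b' \<longrightarrow> N a' > N a \<or> norm b' > norm b \<or> (N a', norm b') = (N a, norm b))"

definition alpha2X :: "('a::real_normed_vector \<Rightarrow> real) \<Rightarrow> 'a \<Rightarrow> real \<Rightarrow> 'a" where
  "alpha2X N c x = (THE a. N a \<le> x \<and> (\<forall>a'. N a' \<le> x \<longrightarrow> norm (c - a) \<le> norm (c - a')))"

definition hYX :: "('a::real_inner \<Rightarrow> real) \<Rightarrow> 'a \<Rightarrow> real \<Rightarrow> real" where
  "hYX N c x = dual_norm N (c - alpha2X N c x)"

end

theory Submission imports Defs begin

locale xn =
  fixes N :: "'a::euclidean_space \<Rightarrow> real"
  assumes nrm: "is_norm N"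
begin

lemma N_nonneg: "N x \<ge> 0" using nrm unfolding is_norm_def by blast
lemma N_zero_iff: "N x = 0 \<longleftrightarrow> x = 0" using nrm unfolding is_norm_def by blast
lemma N_scale: "N (r *\<^sub>R x) = \<bar>r\<bar> * N x" using nrm unfolding is_norm_def by blast
lemma N_tri: "N (x + y) \<le> N x + N y" using nrm unfolding is_norm_def by blast
lemma N_0[simp]: "N 0 = 0" using N_zero_iff by simp
lemma N_minus: "N (- x) = N x" using N_scale[of "-1" x] by simp
lemma N_diff_commute: "N (x - y) = N (y - x)" using N_minus[of "x - y"] by simp

lemma N_sum: "finite S \<Longrightarrow> N (sum f S) \<le> (\<Sum>i\<in>S. N (f i))"
proof (induction S rule: finite_induct)
  case empty then show ?case by simp
next
  case (insert x F)
  then show ?case using N_tri[of "f x" "sum f F"] by simp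
qed

definition M where "M = (\<Sum>b\<in>Basis. N b)"

lemma N_upper: "N x \<le> M * norm x"
proof -
  have "N x = N (\<Sum>b\<in>Basis. (x \<bullet> b) *\<^sub>R b)" by (simp add: euclidean_representation)
  also have "\<dots> \<le> (\<Sum>b\<in>Basis. N ((x \<bullet> b) *\<^sub>R b))" by (rule N_sum) simp
  also have "\<dots> = (\<Sum>b\<in>Basis. \<bar>x \<bullet> b\<bar> * N b)" by (simp add: N_scale)
  also have "\<dots> \<le> (\<Sum>b\<in>Basis. norm x * N b)"
    by (intro sum_mono mult_right_mono N_nonneg Basis_le_norm)
  also have "\<dots> = M * norm x" by (simp add: M_def sum_distrib_left mult.commute)
  finally show ?thesis .
qed

lemma M_nonneg: "M \<ge> 0" unfolding M_def by (simp add: N_nonneg sum_nonneg)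

lemma N_lip: "\<bar>N x - N y\<bar> \<le> M * norm (x - y)"
proof -
  have "N x \<le> N y + N (x - y)" using N_tri[of y "x - y"] by simp
  moreover have "N y \<le> N x + N (y - x)" using N_tri[of x "y - x"] by simp
  ultimately show ?thesis using N_upper[of "x - y"] N_upper[of "y - x"] by (simp add: norm_minus_commute)
qed

lemma N_cont: "continuous_on S N"
proof (rule continuous_on_subset[of UNIV], rule continuous_on_iff[THEN iffD2], safe)
  fix x and e :: real assume e: "e > 0"
  show "\<exists>d>0. \<forall>y\<in>UNIV. dist y x < d \<longrightarrow> dist (N y) (N x) < e"
  proof (intro exI[of _ "e / (M + 1)"] conjI ballI impI)
    show "e / (M + 1) > 0" using e M_nonneg by simp
    fix y assume "dist y x < e / (M + 1)"
    hence "(M + 1) * norm (y - x) < e" using M_nonneg by (simp add: dist_norm field_simps)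
    moreover have "\<bar>N y - N x\<bar> \<le> M * norm (y - x)" by (rule N_lip)
    moreover have "M * norm (y - x) \<le> (M + 1) * norm (y - x)" by (simp add: mult_right_mono)
    ultimately show "dist (N y) (N x) < e" by (simp add: dist_real_def)
  qed
qed auto

lemma N_lower_ex: "\<exists>m>0. \<forall>x. m * norm x \<le> N x"
proof -
  obtain b :: 'a where b: "b \<in> Basis" using nonempty_Basis by blast
  have ne: "sphere (0::'a) 1 \<noteq> {}" using b by (auto simp: norm_Basis)
  obtain x0 where x0: "x0 \<in> sphere 0 1" "\<forall>y\<in>sphere 0 1. N x0 \<le> N y"
    using continuous_attains_inf[OF compact_sphere ne N_cont] by blast
  have "x0 \<noteq> 0" using x0(1) by auto
  hence "N x0 \<noteq> 0" using N_zero_iff by blast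
  hence pos: "N x0 > 0" using N_nonneg[of x0] by linarith
  have "N x0 * norm x \<le> N x" for x
  proof (cases "x = 0")
    case False
    have "x /\<^sub>R norm x \<in> sphere 0 1" using False by simp
    hence "N x0 \<le> N (x /\<^sub>R norm x)" using x0 by blast
    also have "\<dots> = N x / norm x" using N_scale[of "inverse (norm x)" x] by (simp add: divide_inverse mult.commute)
    finally show ?thesis using False by (simp add: field_simps)
  qed simp
  thus ?thesis using pos by blast
qed


definition m where "m = (SOME m. m > 0 \<and> (\<forall>x. m * norm x \<le> N x))"
lemma m_prop: "m > 0 \<and> (\<forall>x. m * norm x \<le> N x)"
  unfolding m_def using N_lower_ex by (rule someI_ex)
lemma m_pos: "m > 0" using m_prop by blast
lemma m_low: "m * norm x \<le> N x" using m_prop by blast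

lemma K_closed: "closed {z. N z \<le> x}"
  by (rule closed_Collect_le[OF N_cont continuous_on_const])

lemma K_convex: "convex {z. N z \<le> x}"
proof (rule convexI, simp)
  fix a b :: 'a and u v :: real
  assume a: "N a \<le> x" and b: "N b \<le> x" and u: "0 \<le> u" and v: "0 \<le> v" and uv: "u + v = 1"
  have "N (u *\<^sub>R a + v *\<^sub>R b) \<le> N (u *\<^sub>R a) + N (v *\<^sub>R b)" by (rule N_tri)
  also have "\<dots> = u * N a + v * N b" using u v by (simp add: N_scale)
  also have "\<dots> \<le> u * x + v * x" using u v a b by (intro add_mono mult_left_mono) auto
  also have "\<dots> = x" using uv by (metis distrib_right mult_1)
  finally show "N (u *\<^sub>R a + v *\<^sub>R b) \<le> x" .
qed

lemma K_ne: "x \<ge> 0 \<Longrightarrow> {z. N z \<le> x} \<noteq> {}" by (auto intro!: exI[of _ 0])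

lemma unit_ne: "{w. N w = 1} \<noteq> {}"
proof -
  obtain b :: 'a where b: "b \<in> Basis" using nonempty_Basis by blast
  hence "b \<noteq> 0" by auto
  hence "N b > 0" using N_zero_iff N_nonneg[of b] by (metis less_eq_real_def)
  hence "N (inverse (N b) *\<^sub>R b) = 1" by (simp add: N_scale)
  thus ?thesis by blast
qed

lemma unit_norm: "N w = 1 \<Longrightarrow> norm w \<le> 1 / m"
  using m_low[of w] m_pos by (simp add: field_simps mult.commute)

lemma inner_unit_le: "N w = 1 \<Longrightarrow> inner v w \<le> norm v / m"
proof -
  assume w: "N w = 1"
  have "inner v w \<le> norm v * norm w" by (rule norm_cauchy_schwarz)
  also have "\<dots> \<le> norm v * (1 / m)" by (rule mult_left_mono[OF unit_norm[OF w]]) simp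
  finally show ?thesis by simp
qed

abbreviation Y where "Y \<equiv> dual_norm N"

lemma Y_bdd: "bdd_above ((\<lambda>w. inner v w) ` {w. N w = 1})"
  using inner_unit_le by (auto intro!: bdd_aboveI[of _ "norm v / m"])

lemma Y_upper: "N w = 1 \<Longrightarrow> inner v w \<le> Y v"
  unfolding dual_norm_def by (rule cSUP_upper[OF _ Y_bdd]) simp

lemma Y_least: "(\<And>w. N w = 1 \<Longrightarrow> inner v w \<le> B) \<Longrightarrow> Y v \<le> B"
  unfolding dual_norm_def by (rule cSUP_least[OF unit_ne]) auto

lemma Y_le_norm: "Y v \<le> norm v / m"
  by (rule Y_least, rule inner_unit_le)

lemma Y_nonneg: "Y v \<ge> 0"
proof -
  obtain w where w: "N w = 1" using unit_ne by blast
  have w': "N (- w) = 1" using w N_minus by simp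
  show ?thesis using Y_upper[OF w, of v] Y_upper[OF w', of v] by simp
qed

lemma Y_sub: "Y (u + v) \<le> Y u + Y v"
  by (rule Y_least) (simp add: inner_add_left add_mono Y_upper)

lemma Y_lip: "\<bar>Y u - Y v\<bar> \<le> norm (u - v) / m"
proof -
  have "Y u \<le> Y v + Y (u - v)" using Y_sub[of v "u - v"] by simp
  moreover have "Y v \<le> Y u + Y (v - u)" using Y_sub[of u "v - u"] by simp
  ultimately show ?thesis using Y_le_norm[of "u - v"] Y_le_norm[of "v - u"]
    by (simp add: norm_minus_commute)
qed

lemma Y_dot: "0 \<le> x \<Longrightarrow> N z \<le> x \<Longrightarrow> inner v z \<le> x * Y v"
proof (cases "z = 0")
  case True
  assume "0 \<le> x" thus ?thesis using True Y_nonneg[of v] by simp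
next
  case False
  assume x: "0 \<le> x" and z: "N z \<le> x"
  have pos: "N z > 0" using False N_zero_iff N_nonneg[of z] by (metis less_eq_real_def)
  let ?w = "inverse (N z) *\<^sub>R z"
  have w: "N ?w = 1" using pos by (simp add: N_scale)
  have "inner v z = N z * inner v ?w" using pos by simp
  also have "\<dots> \<le> N z * Y v" using Y_upper[OF w] pos by (simp add: mult_left_mono)
  also have "\<dots> \<le> x * Y v" using z Y_nonneg[of v] by (simp add: mult_right_mono)
  finally show ?thesis .
qed

end

locale xnc = xn +
  fixes c :: 'a
begin

definition P where "P x = closest_point {z. N z \<le> x} c"

lemma P_in: "x \<ge> 0 \<Longrightarrow> N (P x) \<le> x"
  unfolding P_def using closest_point_in_set[OF K_closed K_ne] by blast

lemma P_min: "x \<ge> 0 \<Longrightarrow> N z \<le> x \<Longrightarrow> norm (c - P x) \<le> norm (c - z)"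
  unfolding P_def using closest_point_le[OF K_closed, of z x c] by (simp add: dist_norm)

lemma P_dot: "x \<ge> 0 \<Longrightarrow> N z \<le> x \<Longrightarrow> inner (c - P x) (z - P x) \<le> 0"
  unfolding P_def using closest_point_dot[OF K_convex K_closed, of z x c] by simp

lemma P_unique: "x \<ge> 0 \<Longrightarrow> N a \<le> x \<Longrightarrow> (\<And>z. N z \<le> x \<Longrightarrow> norm (c - a) \<le> norm (c - z)) \<Longrightarrow> a = P x"
  unfolding P_def by (rule closest_point_unique[OF K_convex K_closed]) (auto simp: dist_norm)

lemma alpha_eq: "x \<ge> 0 \<Longrightarrow> alpha2X N c x = P x"
  unfolding alpha2X_def
  by (rule the_equality) (auto simp: P_in P_min intro: P_unique)

lemma h_eq: "x \<ge> 0 \<Longrightarrow> hYX N c x = Y (c - P x)"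
  by (simp add: hYX_def alpha_eq)

lemma P0: "P 0 = 0"
  using P_in[of 0] N_nonneg[of "P 0"] N_zero_iff by (metis order_antisym order_refl)

lemma Pc: "x \<ge> N c \<Longrightarrow> P x = c"
  using P_unique[of x c] N_nonneg[of c] by simp

lemma b_norm: "x \<ge> 0 \<Longrightarrow> norm (c - P x) \<le> norm c"
  using P_min[of x 0] by simp

lemma P_norm: "x \<ge> 0 \<Longrightarrow> norm (P x) \<le> 2 * norm c"
  using b_norm[of x] norm_triangle_ineq4[of c "c - P x"] by simp

lemma key: "x \<ge> 0 \<Longrightarrow> x * Y (c - P x) = inner (c - P x) (P x)"
proof (cases "x = 0")
  case True thus ?thesis by (simp add: P0)
next
  case False
  assume x0: "x \<ge> 0"
  hence x: "x > 0" using False by simp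
  have "inner (c - P x) (P x) \<le> x * Y (c - P x)" by (rule Y_dot[OF x0 P_in[OF x0]])
  moreover have "Y (c - P x) \<le> inner (c - P x) (P x) / x"
  proof (rule Y_least)
    fix w assume w: "N w = 1"
    have "N (x *\<^sub>R w) \<le> x" using w x by (simp add: N_scale)
    hence "inner (c - P x) (x *\<^sub>R w - P x) \<le> 0" by (rule P_dot[OF x0])
    hence "x * inner (c - P x) w \<le> inner (c - P x) (P x)" by (simp add: inner_diff_right)
    thus "inner (c - P x) w \<le> inner (c - P x) (P x) / x" using x by (simp add: field_simps mult.commute)
  qed
  ultimately show ?thesis using x by (simp add: field_simps)
qed


definition f where "f x = norm (c - P x)^2 / 2"
definition hh where "hh x = Y (c - P x)"

lemma norm_sq_expand: "norm (b + s *\<^sub>R a)^2 = norm b ^2 + 2 * s * inner b a + s^2 * norm a ^2"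
  unfolding power2_norm_eq_inner by (simp add: inner_add_left inner_add_right inner_commute power2_eq_square algebra_simps)

lemma U_eq:
  assumes x: "x > 0"
  shows "norm (c - (y / x) *\<^sub>R P x)^2 / 2 = f x - (y - x) * hh x + (y - x)^2 * norm (P x)^2 / (2 * x^2)"
proof -
  let ?a = "P x" let ?b = "c - P x" let ?s = "1 - y / x"
  have e: "c - (y / x) *\<^sub>R ?a = ?b + ?s *\<^sub>R ?a" by (simp add: algebra_simps)
  have k: "inner ?b ?a = x * hh x" using key[of x] x by (simp add: hh_def)
  have s1: "?s * x = x - y" using x by (simp add: field_simps)
  have s2: "?s^2 = (y - x)^2 / x^2" using x by (simp add: field_simps power2_eq_square)
  have "norm (c - (y / x) *\<^sub>R ?a)^2 = norm ?b^2 + 2 * ?s * inner ?b ?a + ?s^2 * norm ?a^2"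
    unfolding e by (rule norm_sq_expand)
  also have "\<dots> = norm ?b^2 + 2 * (x - y) * hh x + (y - x)^2 * norm ?a^2 / x^2"
    unfolding k s2 s1[symmetric] by (simp add: algebra_simps)
  finally show ?thesis unfolding f_def by (simp add: field_simps)
qed

lemma U:
  assumes x: "x > 0" and y: "y \<ge> 0"
  shows "f y \<le> f x - (y - x) * hh x + (y - x)^2 * norm (P x)^2 / (2 * x^2)"
proof -
  have "N ((y / x) *\<^sub>R P x) = (y / x) * N (P x)" using x y by (simp add: N_scale)
  also have "\<dots> \<le> (y / x) * x" using x y P_in[of x] by (intro mult_left_mono) auto
  also have "\<dots> = y" using x by simp
  finally have "norm (c - P y) \<le> norm (c - (y / x) *\<^sub>R P x)" by (rule P_min[OF y])
  hence "norm (c - P y)^2 \<le> norm (c - (y / x) *\<^sub>R P x)^2" by (simp add: power_mono)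
  thus ?thesis using U_eq[OF x, of y] unfolding f_def by linarith
qed

lemma proj_ineq:
  assumes y: "y \<ge> 0" and z: "N z \<le> y"
  shows "norm (P y - z)^2 \<le> norm (c - z)^2 - norm (c - P y)^2"
proof -
  have d: "inner (c - P y) (z - P y) \<le> 0" by (rule P_dot[OF y z])
  have "c - z = (c - P y) + (-1) *\<^sub>R (z - P y)" by simp
  hence "norm (c - z)^2 = norm (c - P y)^2 + 2 * (-1) * inner (c - P y) (z - P y) + norm (z - P y)^2"
    using norm_sq_expand[of "c - P y" "-1" "z - P y"] by simp
  thus ?thesis using d by (simp add: norm_minus_commute)
qed

lemma hh_bound: "x \<ge> 0 \<Longrightarrow> hh x \<le> norm c / m"
  unfolding hh_def using Y_le_norm[of "c - P x"] b_norm[of x] m_pos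
  by (meson divide_right_mono less_imp_le order_trans)

lemma hh_nonneg: "hh x \<ge> 0" unfolding hh_def by (rule Y_nonneg)

definition phi where "phi x y = sqrt (2 * (\<bar>y - x\<bar> * (norm c / m) + (y - x)^2 * (4 * norm c ^2) * (1 / (2 * x^2) + 1 / (2 * y^2)))) + \<bar>y - x\<bar> / x * (2 * norm c)"

lemma comb: fixes Q G fy fx E1 E2 R1 R2 T A B :: real
  assumes "Q \<le> 2 * (G - fy)" "fx \<le> fy + A + E2"
       "G = fx - B + E1" "A - B \<le> T" "E1 \<le> R1" "E2 \<le> R2"
  shows "Q \<le> 2 * (T + (R1 + R2))"
  using assms by argo

lemma P_bound:
  assumes x: "x > 0" and y: "y > 0"
  shows "norm (P y - P x) \<le> phi x y"
proof -
  let ?t = "y / x"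
  have Nz: "N (?t *\<^sub>R P x) \<le> y"
  proof -
    have "N (?t *\<^sub>R P x) = ?t * N (P x)" using x y by (simp add: N_scale)
    also have "\<dots> \<le> ?t * x" using x y P_in[of x] by (intro mult_left_mono) auto
    finally show ?thesis using x by simp
  qed
  have A: "norm (P y - ?t *\<^sub>R P x)^2 \<le> 2 * (norm (c - ?t *\<^sub>R P x)^2/2 - f y)"
    using proj_ineq[OF _ Nz] y unfolding f_def by simp
  have B: "f x \<le> f y - (x - y) * hh y + (x - y)^2 * norm (P y)^2 / (2 * y^2)"
    using U[OF y, of x] x by simp
  have hb: "(y - x) * (hh y - hh x) \<le> \<bar>y - x\<bar> * (norm c / m)"
  proof -
    have "\<bar>hh y - hh x\<bar> \<le> norm c / m"
      using hh_bound[of x] hh_bound[of y] hh_nonneg[of x] hh_nonneg[of y] x y by auto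
    hence "\<bar>y - x\<bar> * \<bar>hh y - hh x\<bar> \<le> \<bar>y - x\<bar> * (norm c / m)"
      by (rule mult_left_mono) simp
    hence "\<bar>(y - x) * (hh y - hh x)\<bar> \<le> \<bar>y - x\<bar> * (norm c / m)"
      by (simp add: abs_mult)
    thus ?thesis by linarith
  qed
  have px: "norm (P x)^2 \<le> 4 * norm c^2"
  proof -
    have "norm (P x)^2 \<le> (2 * norm c)^2" using P_norm[of x] x by (intro power_mono) auto
    thus ?thesis by (simp add: power_mult_distrib)
  qed 
  have py: "norm (P y)^2 \<le> 4 * norm c^2"
  proof -
    have "norm (P y)^2 \<le> (2 * norm c)^2" using P_norm[of y] y by (intro power_mono) auto
    thus ?thesis by (simp add: power_mult_distrib)
  qed
  have e1: "(y - x)^2 * norm (P x)^2 / (2 * x^2) \<le> (y - x)^2 * (4 * norm c ^2) * (1 / (2 * x^2))"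
  proof -
    have "(y - x)^2 * norm (P x)^2 \<le> (y - x)^2 * (4 * norm c^2)" by (rule mult_left_mono[OF px]) simp
    hence "(y - x)^2 * norm (P x)^2 / (2 * x^2) \<le> (y - x)^2 * (4 * norm c^2) / (2 * x^2)" by (rule divide_right_mono) simp
    thus ?thesis by simp
  qed
  have e2: "(x - y)^2 * norm (P y)^2 / (2 * y^2) \<le> (y - x)^2 * (4 * norm c ^2) * (1 / (2 * y^2))"
  proof -
    have "(y - x)^2 * norm (P y)^2 \<le> (y - x)^2 * (4 * norm c^2)" by (rule mult_left_mono[OF py]) simp
    hence "(y - x)^2 * norm (P y)^2 / (2 * y^2) \<le> (y - x)^2 * (4 * norm c^2) / (2 * y^2)" by (rule divide_right_mono) simp
    thus ?thesis by (simp add: power2_commute)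
  qed
  have sq: "norm (P y - ?t *\<^sub>R P x)^2 \<le> 2 * (\<bar>y - x\<bar> * (norm c / m) + (y - x)^2 * (4 * norm c ^2) * (1 / (2 * x^2) + 1 / (2 * y^2)))"
  proof -
    have B': "f x \<le> f y + (y - x) * hh y + (x - y)^2 * norm (P y)^2 / (2 * y^2)"
      using B by (simp add: algebra_simps)
    have hb': "(y - x) * hh y - (y - x) * hh x \<le> \<bar>y - x\<bar> * (norm c / m)" using hb by (simp add: algebra_simps)
    have r: "(y - x)^2 * (4 * norm c ^2) * (1 / (2 * x^2) + 1 / (2 * y^2)) = (y - x)^2 * (4 * norm c ^2) * (1 / (2 * x^2)) + (y - x)^2 * (4 * norm c ^2) * (1 / (2 * y^2))"
      by (simp add: distrib_left)
    show ?thesis unfolding r by (rule comb[OF A B' U_eq[OF x, of y] hb' e1 e2])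
  qed
  hence s1: "norm (P y - ?t *\<^sub>R P x) \<le> sqrt (2 * (\<bar>y - x\<bar> * (norm c / m) + (y - x)^2 * (4 * norm c ^2) * (1 / (2 * x^2) + 1 / (2 * y^2))))"
    by (simp add: real_le_rsqrt)
  have s2: "norm (?t *\<^sub>R P x - P x) \<le> \<bar>y - x\<bar> / x * (2 * norm c)"
  proof -
    have "?t *\<^sub>R P x - P x = (?t - 1) *\<^sub>R P x" by (simp add: algebra_simps)
    moreover have "\<bar>?t - 1\<bar> = \<bar>y - x\<bar> / x" using x by (simp add: field_simps)
    ultimately have "norm (?t *\<^sub>R P x - P x) = \<bar>y - x\<bar> / x * norm (P x)" by simp
    also have "\<dots> \<le> \<bar>y - x\<bar> / x * (2 * norm c)" using x by (intro mult_left_mono P_norm) auto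
    finally show ?thesis .
  qed
  have "norm (P y - P x) \<le> norm (P y - ?t *\<^sub>R P x) + norm (?t *\<^sub>R P x - P x)"
    using norm_triangle_ineq[of "P y - ?t *\<^sub>R P x" "?t *\<^sub>R P x - P x"] by simp
  thus ?thesis using s1 s2 unfolding phi_def by linarith
qed


lemma phi_lim: assumes x: "x > 0" shows "(phi x \<longlongrightarrow> 0) (at x)"
proof -
  have "isCont (phi x) x" unfolding phi_def using x by (intro continuous_intros) auto
  hence "(phi x \<longlongrightarrow> phi x x) (at x)" by (simp add: isCont_def)
  moreover have "phi x x = 0" unfolding phi_def by simp
  ultimately show ?thesis by simp
qed

lemma ev_pos: "x > 0 \<Longrightarrow> eventually (\<lambda>y. y > (0::real)) (at x)"
  using order_tendstoD(1)[OF tendsto_ident_at] by blast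

lemma P_tendsto: assumes x: "x > 0" shows "(P \<longlongrightarrow> P x) (at x)"
proof (rule LIM_zero_cancel, rule Lim_null_comparison[OF _ phi_lim[OF x]])
  show "\<forall>\<^sub>F y in at x. norm (P y - P x) \<le> phi x y"
    using ev_pos[OF x] by eventually_elim (rule P_bound[OF x])
qed

lemma P_tendsto0: "(P \<longlongrightarrow> P 0) (at 0 within {0..})"
proof (rule LIM_zero_cancel, rule Lim_null_comparison)
  show "\<forall>\<^sub>F y in at 0 within {0..}. norm (P y - P 0) \<le> y / m"
    unfolding eventually_at_filter
  proof (rule always_eventually, intro allI impI)
    fix y :: real assume "y \<in> {0..}"
    hence y: "y \<ge> 0" by simp
    have "m * norm (P y) \<le> y" using m_low[of "P y"] P_in[OF y] by linarith
    thus "norm (P y - P 0) \<le> y / m" using m_pos by (simp add: P0 field_simps mult.commute)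
  qed
  have "((\<lambda>y. y / m) \<longlongrightarrow> 0 / m) (at 0 within {0..})" using m_pos by (intro tendsto_intros) auto
  thus "((\<lambda>y. y / m) \<longlongrightarrow> 0) (at 0 within {0..})" by simp
qed

lemma P_cont: "continuous_on {0..} P"
  unfolding continuous_on_def
proof
  fix x :: real assume "x \<in> {0..}"
  hence "x = 0 \<or> x > 0" by auto
  thus "(P \<longlongrightarrow> P x) (at x within {0..})"
  proof
    assume "x = 0" thus ?thesis using P_tendsto0 by simp
  next
    assume "x > 0" thus ?thesis using tendsto_within_subset[OF P_tendsto] by blast
  qed
qed

lemma hh_tendsto: assumes "(P \<longlongrightarrow> P x) F" shows "(hh \<longlongrightarrow> hh x) F"
proof (rule LIM_zero_cancel, rule Lim_null_comparison)
  show "\<forall>\<^sub>F y in F. norm (hh y - hh x) \<le> norm (P y - P x) / m"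
    unfolding hh_def using Y_lip[of "c - P _" "c - P x"]
    by (intro always_eventually allI) (simp add: norm_minus_commute)
  have "((\<lambda>y. norm (P y - P x) / m) \<longlongrightarrow> norm (P x - P x) / m) F"
    using m_pos by (intro tendsto_intros assms) auto
  thus "((\<lambda>y. norm (P y - P x) / m) \<longlongrightarrow> 0) F" by simp
qed

lemma f_tendsto: assumes "(P \<longlongrightarrow> P x) F" shows "(f \<longlongrightarrow> f x) F"
  unfolding f_def by (intro tendsto_intros assms) auto

lemma f_cont: "continuous_on {0..} f"
  using P_cont f_tendsto unfolding continuous_on_def by blast

lemma hh_cont: "continuous_on {0..} hh"
  using P_cont hh_tendsto unfolding continuous_on_def by blast

lemma sqz:
  fixes d F H1 H2 E1 E2 :: real
  assumes d: "d \<noteq> 0" and u: "F \<le> - d * H1 + d^2 * E1" and l: "F \<ge> - d * H2 - d^2 * E2"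
    and e: "E1 \<ge> 0" "E2 \<ge> 0"
  shows "\<bar>F / d + H1\<bar> \<le> \<bar>H2 - H1\<bar> + \<bar>d\<bar> * (E1 + E2)"
proof (cases "d > 0")
  case True
  have a: "F / d \<le> - H1 + d * E1" using u True by (simp add: field_simps power2_eq_square)
  have b: "F / d \<ge> - H2 - d * E2" using l True by (simp add: field_simps power2_eq_square)
  have "d * E1 \<ge> 0" "d * E2 \<ge> 0" using True e by auto
  thus ?thesis using a b True by (simp add: abs_if algebra_simps)
next
  case False
  hence dn: "d < 0" using d by simp
  have a: "F / d \<ge> - H1 + d * E1" using u dn by (simp add: field_simps power2_eq_square)
  have b: "F / d \<le> - H2 - d * E2" using l dn by (simp add: field_simps power2_eq_square)
  have "d * E1 \<le> 0" "d * E2 \<le> 0" using dn e by (auto simp: mult_nonpos_nonneg)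
  thus ?thesis using a b dn by (simp add: abs_if algebra_simps)
qed

lemma f_deriv: assumes x: "x > 0" shows "(f has_real_derivative (- hh x)) (at x)"
  unfolding has_field_derivative_iff
proof (rule LIM_zero_cancel, rule Lim_null_comparison)
  let ?g = "\<lambda>y. \<bar>hh y - hh x\<bar> + \<bar>y - x\<bar> * (norm (P x)^2 / (2 * x^2) + norm (P y)^2 / (2 * y^2))"
  show "\<forall>\<^sub>F y in at x. norm ((f y - f x) / (y - x) - - hh x) \<le> ?g y"
    using ev_pos[OF x] eventually_neq_at_within[of x x UNIV]
  proof eventually_elim
    case (elim y)
    have u: "f y - f x \<le> - (y - x) * hh x + (y - x)^2 * (norm (P x)^2 / (2 * x^2))"
      using U[OF x, of y] elim by (simp add: algebra_simps)
    have l: "f y - f x \<ge> - (y - x) * hh y - (y - x)^2 * (norm (P y)^2 / (2 * y^2))"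
      using U[of y x] elim x by (simp add: power2_commute algebra_simps)
    show ?case using sqz[OF _ u l] elim by simp
  qed
  have "(?g \<longlongrightarrow> \<bar>hh x - hh x\<bar> + \<bar>x - x\<bar> * (norm (P x)^2 / (2 * x^2) + norm (P x)^2 / (2 * x^2))) (at x)"
    using x by (intro tendsto_intros hh_tendsto P_tendsto) auto
  thus "(?g \<longlongrightarrow> 0) (at x)" by simp
qed

lemma ftc: assumes "0 \<le> u" "u \<le> v" shows "(hh has_integral (f u - f v)) {u..v}"
proof -
  have "((\<lambda>x. - hh x) has_integral (f v - f u)) {u..v}"
  proof (rule fundamental_theorem_of_calculus_interior[OF assms(2)])
    show "continuous_on {u..v} f" by (rule continuous_on_subset[OF f_cont]) (use assms in auto)
    fix x assume "x \<in> {u<..<v}"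
    hence "x > 0" using assms by auto
    thus "(f has_vector_derivative - hh x) (at x)"
      using f_deriv has_real_derivative_iff_has_vector_derivative by blast
  qed
  from has_integral_neg[OF this] show ?thesis by simp
qed


lemma norm_sq_convex: fixes u v :: 'a shows
  "norm ((1 - t) *\<^sub>R u + t *\<^sub>R v)^2 = (1 - t) * norm u^2 + t * norm v^2 - t * (1 - t) * norm (u - v)^2"
  unfolding power2_norm_eq_inner
  by (simp add: inner_add_left inner_add_right inner_diff_left inner_diff_right inner_commute algebra_simps power2_eq_square)

lemma f_convex: "convex_on {0<..} f"
proof (rule convex_onI)
  fix t x y :: real assume t: "0 < t" "t < 1" and x: "x \<in> {0<..}" and y: "y \<in> {0<..}"
  let ?w = "(1 - t) *\<^sub>R x + t *\<^sub>R y"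
  let ?z = "(1 - t) *\<^sub>R P x + t *\<^sub>R P y"
  have w: "?w \<ge> 0" using t x y by simp
  have "N ?z \<le> N ((1 - t) *\<^sub>R P x) + N (t *\<^sub>R P y)" by (rule N_tri)
  also have "\<dots> = (1 - t) * N (P x) + t * N (P y)" using t by (simp add: N_scale)
  also have "\<dots> \<le> (1 - t) * x + t * y" using t x y P_in[of x] P_in[of y]
    by (intro add_mono mult_left_mono) auto
  finally have Nz: "N ?z \<le> ?w" by simp
  have "norm (c - P ?w) \<le> norm (c - ?z)" by (rule P_min[OF w Nz])
  hence "norm (c - P ?w)^2 \<le> norm (c - ?z)^2" by (simp add: power_mono)
  also have "c - ?z = (1 - t) *\<^sub>R (c - P x) + t *\<^sub>R (c - P y)" by (simp add: algebra_simps)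
  also have "norm \<dots> ^2 \<le> (1 - t) * norm (c - P x)^2 + t * norm (c - P y)^2"
    unfolding norm_sq_convex using t by simp
  finally show "f ?w \<le> (1 - t) * f x + t * f y" unfolding f_def by simp
qed simp

lemma hh_mono_pos: assumes x: "0 < x" and xy: "x \<le> y" shows "hh y \<le> hh x"
proof -
  have y: "0 < y" using x xy by simp
  have int: "interior {0<..} = ({0<..} :: real set)" by (simp add: interior_open)
  have d: "\<And>z. z > 0 \<Longrightarrow> (f has_real_derivative - hh z) (at z within {0<..})"
    using f_deriv has_field_derivative_at_within by blast
  have a: "f y - f x \<ge> - hh x * (y - x)"
    by (rule convex_on_imp_above_tangent[OF f_convex _ _ _ d]) (use x y int in \<open>auto intro: convex_connected\<close>)
  have b: "f x - f y \<ge> - hh y * (x - y)"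
    by (rule convex_on_imp_above_tangent[OF f_convex _ _ _ d]) (use x y int in \<open>auto intro: convex_connected\<close>)
  have "(y - x) * (hh y - hh x) \<le> 0" using a b by (simp add: algebra_simps)
  thus ?thesis using xy by (cases "x = y") (auto simp: mult_le_0_iff)
qed

lemma hh_le0: assumes x: "0 \<le> x" shows "hh x \<le> hh 0"
proof (cases "x = 0")
  case False
  hence xp: "x > 0" using x by simp
  have "x * hh x = inner (c - P x) (P x)" using key[OF x] by (simp add: hh_def)
  also have "\<dots> = inner c (P x) - norm (P x)^2" by (simp add: inner_diff_left power2_norm_eq_inner)
  also have "\<dots> \<le> inner c (P x)" by simp
  also have "\<dots> \<le> x * Y c" by (rule Y_dot[OF x P_in[OF x]])
  also have "Y c = hh 0" by (simp add: hh_def P0)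
  finally show ?thesis using xp by simp
qed simp

lemma hh_mono: "0 \<le> x \<Longrightarrow> x \<le> y \<Longrightarrow> hh y \<le> hh x"
  using hh_mono_pos hh_le0 by (cases "x = 0") auto

end
theorem proposition2p5:
  fixes NX :: "'a::euclidean_space \<Rightarrow> real" and c a b :: 'a
  assumes "is_norm NX"
    and "is_X2_decomp NX c a b"
  shows "(hYX NX c has_integral (norm c ^ 2 / 2)) {0..NX c}
    \<and> (hYX NX c has_integral (norm b ^ 2 / 2)) {NX a..NX c}
    \<and> ({(x, y). 0 \<le> x \<and> x \<le> NX c \<and> dual_norm NX b \<le> y \<and> y \<le> hYX NX c x} \<in> sets lebesgue
         \<and> emeasure lebesgue {(x, y). 0 \<le> x \<and> x \<le> NX c \<and> dual_norm NX b \<le> y \<and> y \<le> hYX NX c x}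
             = ennreal (norm a ^ 2 / 2))
    \<and> NX a * dual_norm NX b = inner a b"
proof -
  interpret xnc NX c by unfold_locales (rule assms(1))
  have cab: "c = a + b" and D: "\<And>a' b'. c = a' + b' \<Longrightarrow> NX a' > NX a \<or> norm b' > norm b \<or> (NX a', norm b') = (NX a, norm b)"
    using assms(2) unfolding is_X2_decomp_def by blast+
  have bca: "b = c - a" using cab by simp
  define x0 where "x0 = NX a"
  have x0: "x0 \<ge> 0" unfolding x0_def by (rule N_nonneg)
  have amin: "norm (c - a) \<le> norm (c - z)" if "NX z \<le> x0" for z
    using D[of z "c - z"] that bca unfolding x0_def by auto
  have aP: "a = P x0" by (rule P_unique[OF x0]) (use amin x0_def in auto)
  have x0c: "x0 \<le> NX c"
  proof (rule ccontr)
    assume "\<not> x0 \<le> NX c"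
    thus False using D[of c 0] unfolding x0_def by auto
  qed
  have hY: "\<And>x. x \<ge> 0 \<Longrightarrow> hYX NX c x = hh x" by (simp add: h_eq hh_def)
  have f0: "f 0 = norm c ^ 2 / 2" by (simp add: f_def P0)
  have fc: "f (NX c) = 0" by (simp add: f_def Pc)
  have fx0: "f x0 = norm b ^ 2 / 2" by (simp add: f_def aP[symmetric] bca)
  have y0: "dual_norm NX b = hh x0" by (simp add: hh_def aP[symmetric] bca)
  have I1: "(hYX NX c has_integral (norm c ^ 2 / 2)) {0..NX c}"
    using ftc[of 0 "NX c"] N_nonneg[of c] f0 fc by (subst has_integral_cong[OF hY]) auto
  have I2: "(hYX NX c has_integral (norm b ^ 2 / 2)) {NX a..NX c}"
    using ftc[OF x0 x0c] fx0 fc x0 unfolding x0_def by (subst has_integral_cong[OF hY]) auto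
  have k: "x0 * hh x0 = inner a b" using key[OF x0] by (simp add: hh_def aP[symmetric] bca inner_commute)
  have I4: "NX a * dual_norm NX b = inner a b" using k y0 x0_def by simp
  define y0' where "y0' = hh x0"
  define g where "g x = max (hh x - y0') 0" for x
  have g_nonneg: "g x \<ge> 0" for x unfolding g_def by simp
  have gA: "(g has_integral (f 0 - f x0 - y0' * x0)) {0..x0}"
  proof -
    have "((\<lambda>x. hh x - y0') has_integral (f 0 - f x0 - y0' * x0)) {0..x0}"
      using has_integral_diff[OF ftc[of 0 x0] has_integral_const_real[of y0' 0 x0]] x0 by (simp add: mult.commute)
    moreover have "hh x - y0' = g x" if "x \<in> {0..x0}" for x
    proof -
      have "hh x0 \<le> hh x" using that by (intro hh_mono) auto
      thus ?thesis unfolding g_def y0'_def by simp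
    qed
    ultimately show ?thesis by (rule has_integral_eq[rotated])
  qed
  have gB: "(g has_integral 0) {x0..NX c}"
  proof -
    have "0 = g x" if "x \<in> {x0..NX c}" for x
    proof -
      have "hh x \<le> hh x0" using that x0 by (intro hh_mono) auto
      thus ?thesis unfolding g_def y0'_def by simp
    qed
    thus ?thesis by (rule has_integral_eq[OF _ has_integral_0])
  qed
  have val: "f 0 - f x0 - y0' * x0 = norm a ^ 2 / 2"
  proof -
    have "norm c ^ 2 = norm a ^ 2 + 2 * inner a b + norm b ^ 2"
      unfolding cab power2_norm_eq_inner by (simp add: inner_add_left inner_add_right inner_commute)
    thus ?thesis using f0 fx0 k unfolding y0'_def by (simp add: mult.commute)
  qed
  have gI: "(g has_integral (norm a ^ 2 / 2)) {0..NX c}"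
    using has_integral_combine[OF x0 x0c gA gB] val by simp
  define S where "S = {(x, y). 0 \<le> x \<and> x \<le> NX c \<and> dual_norm NX b \<le> y \<and> y \<le> hYX NX c x}"
  have S': "S = ({0..NX c} \<times> UNIV) \<inter> (\<lambda>p. (snd p - y0', hh (fst p) - snd p)) -` ({0..} \<times> {0..})"
    unfolding S_def y0'_def y0[symmetric] by (auto simp: hY)
  have cont: "continuous_on ({0..NX c} \<times> UNIV) (\<lambda>p. (snd p - y0', hh (fst p) - snd p))"
  proof -
    have "continuous_on ({0..NX c} \<times> UNIV) (\<lambda>p. hh (fst p))"
      by (rule continuous_on_compose2[OF hh_cont]) (auto intro: continuous_intros)
    thus ?thesis by (intro continuous_intros)
  qed
  have clS: "closed S" unfolding S'
    by (rule continuous_closed_preimage[OF cont]) (auto intro: closed_Times)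
  hence Sb: "S \<in> sets lborel" by simp
  hence SL: "S \<in> sets lebesgue" by simp
  have Sp: "S \<in> sets (lborel \<Otimes>\<^sub>M lborel)" unfolding lborel_prod by (rule Sb)
  have sl: "Pair x -` S = (if x \<in> {0..NX c} then {y0'..hh x} else {})" for x
    unfolding S_def y0'_def y0[symmetric] by (auto simp: hY)
  have "emeasure lebesgue S = emeasure lborel S" using Sb by simp
  also have "\<dots> = emeasure (lborel \<Otimes>\<^sub>M lborel) S" by (simp add: lborel_prod)
  also have "\<dots> = (\<integral>\<^sup>+x. emeasure lborel (Pair x -` S) \<partial>lborel)"
    by (rule lborel.emeasure_pair_measure_alt[OF Sp])
  also have "\<dots> = (\<integral>\<^sup>+x. ennreal (g x) * indicator {0..NX c} x \<partial>lborel)"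
    by (rule nn_integral_cong) (auto simp: sl g_def indicator_def max_def emeasure_lborel_Icc_eq)
  also have "\<dots> = ennreal (norm a ^ 2 / 2)"
    by (rule nn_integral_has_integral_lebesgue'[OF g_nonneg gI])
  finally have I3: "emeasure lebesgue S = ennreal (norm a ^ 2 / 2)" .
  show ?thesis using I1 I2 I4 SL I3 unfolding S_def by blast
qed

end
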